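(* Let $c,d>0$ with $cd\le1$ and $g(x)=xF(c,d;c+d;x)$ for $x\in(0,1)$. For every fixed $s>0$, the function $p\mapsto \dfrac{1}{p}\,g\!\left(\frac{s^p}{1+s^p}\right)$ is monotone decreasing on $(0,\infty)$.
   Context: $F(a,b;c;x)$ is the Gaussian hypergeometric function $\sum_{n\ge0}\frac{(a)_n(b)_n}{(c)_n}\frac{x^n}{n!}$ ($|x|<1$), with $(a)_n=a(a+1)\cdots(a+n-1)$, $(a)_0=1$. *)

theory Defs
  imports "HOL-Analysis.Analysis"
begin

definition hyp2F1 :: "real \<Rightarrow> real \<Rightarrow> real \<Rightarrow> real \<Rightarrow> real" where
  "hyp2F1 a b c x =
     (\<Sum>n. pochhammer a n * pochhammer b n / pochhammer c n * x ^ n / fact n)"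

end

theory Submission
  imports Defs
begin

definition hc :: "real \<Rightarrow> real \<Rightarrow> nat \<Rightarrow> real" where
  "hc c d n = pochhammer c n * pochhammer d n / pochhammer (c+d) n / fact n"
definition ec :: "real \<Rightarrow> real \<Rightarrow> nat \<Rightarrow> real" where
  "ec c d n = (if n = 0 then 0 else hc c d (n-1))"
definition gg :: "real \<Rightarrow> real \<Rightarrow> real \<Rightarrow> real" where
  "gg c d x = (\<Sum>n. ec c d n * x^n)"
definition gd :: "real \<Rightarrow> real \<Rightarrow> real \<Rightarrow> real" where
  "gd c d x = (\<Sum>n. diffs (ec c d) n * x^n)"
definition psi :: "real \<Rightarrow> real \<Rightarrow> real \<Rightarrow> real" where
  "psi c d x = (1-x) * gd c d x"
definition wc :: "real \<Rightarrow> real \<Rightarrow> nat \<Rightarrow> real" where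
  "wc c d n = diffs (ec c d) n - (if n = 0 then 0 else diffs (ec c d) (n-1))"
definition sig :: "real \<Rightarrow> real" where
  "sig t = exp t / (1 + exp t)"

lemma hc_Suc:
  assumes "c > 0" "d > 0"
  shows "hc c d (Suc n) = hc c d n * ((c+n)*(d+n)/((c+d+n)*(n+1)))"
proof -
  have "pochhammer (c+d) n > 0" using assms by (intro pochhammer_pos) auto
  moreover have "c + d + n > 0" using assms by simp
  ultimately show ?thesis unfolding hc_def
    by (simp add: pochhammer_Suc fact_Suc field_simps)
qed

lemma hc_pos: assumes "c > 0" "d > 0" shows "hc c d n > 0"
  unfolding hc_def using assms by (auto intro!: divide_pos_pos mult_pos_pos pochhammer_pos)

lemma ratio_le1:
  fixes n :: nat and c d :: real
  assumes "c > 0" "d > 0" "c*d \<le> 1"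
  shows "(c+n)*(d+n)/((c+d+n)*(n+1)) \<le> (1::real)"
proof -
  have "c*d \<le> c + d"
  proof (cases "c + d \<ge> 1")
    case False
    then have "d \<le> 1" using assms by simp
    then have "c*d \<le> c" using assms mult_left_le[of d c] by simp
    then show ?thesis using assms by linarith
  qed (use assms in simp)
  moreover have "(c+d+n)*(n+1) - (c+n)*(d+n) = c + d + real n - c*d" by (simp add: algebra_simps)
  ultimately have "(c+n)*(d+n) \<le> (c+d+n)*(n+1)" by (smt (verit) of_nat_0_le_iff)
  moreover have "(c+d+n)*(n+1) > 0" using assms by simp
  ultimately show ?thesis by simp
qed

lemma hc_le1:
  assumes "c > 0" "d > 0" "c*d \<le> 1"
  shows "hc c d n \<le> 1"
proof (induction n)
  case 0 then show ?case by (simp add: hc_def)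
next
  case (Suc n)
  have "hc c d n * ((c+n)*(d+n)/((c+d+n)*(n+1))) \<le> hc c d n"
    using ratio_le1[OF assms, of n] hc_pos[OF assms(1,2), of n]
    by (intro mult_left_le) (auto simp: add.commute)
  then have "hc c d (Suc n) \<le> hc c d n"
    unfolding hc_Suc[OF assms(1,2)] .
  then show ?case using Suc by simp
qed

lemma ec_bounds:
  assumes "c > 0" "d > 0" "c*d \<le> 1"
  shows "0 \<le> ec c d n" "ec c d n \<le> 1"
  unfolding ec_def using hc_pos[OF assms(1,2)] hc_le1[OF assms] by (auto simp: less_imp_le)

lemma ec_summable:
  assumes "c > 0" "d > 0" "c*d \<le> 1" "norm (x::real) < 1"
  shows "summable (\<lambda>n. ec c d n * x^n)"
proof (rule summable_comparison_test[OF _ summable_geometric[of "norm x"]])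
  show "\<exists>N. \<forall>n\<ge>N. norm (ec c d n * x ^ n) \<le> norm x ^ n"
    using ec_bounds[OF assms(1-3)]
    by (auto simp: abs_mult power_abs intro!: mult_left_le_one_le)
qed (use assms in auto)

lemma gg_deriv:
  assumes "c > 0" "d > 0" "c*d \<le> 1" "norm (x::real) < 1"
  shows "(gg c d has_field_derivative gd c d x) (at x)"
  unfolding gg_def[abs_def] gd_def
  by (rule termdiffs_strong'[of 1]) (use ec_summable[OF assms(1-3)] assms in auto)

lemma gd_summable:
  assumes "c > 0" "d > 0" "c*d \<le> 1" "norm (x::real) < 1"
  shows "summable (\<lambda>n. diffs (ec c d) n * x^n)"
  by (rule termdiff_converges[of x 1]) (use ec_summable[OF assms(1-3)] assms in auto)

lemma diffs_ec: "diffs (ec c d) n = (n+1) * hc c d n"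
  by (simp add: diffs_def ec_def)

lemma two_cd:
  fixes c d :: real
  assumes "c > 0" "d > 0" "c*d \<le> 1"
  shows "2*c*d \<le> c + d"
proof (rule ccontr)
  assume "\<not> ?thesis"
  hence "c + d < 2*c*d" by simp
  hence "(c+d)^2 < (2*c*d)^2" using assms by (intro power_strict_mono) auto
  moreover have "(c-d)^2 \<ge> 0" by simp
  moreover have "(c*d)*(c*d) \<le> c*d" using assms by (intro mult_left_le) auto
  ultimately show False by (simp add: power2_eq_square algebra_simps)
qed

lemma wc_nonpos:
  fixes c d :: real
  assumes "c > 0" "d > 0" "c*d \<le> 1" "n > 0"
  shows "wc c d n \<le> 0"
proof -
  obtain m where n: "n = Suc m" using assms(4) by (cases n) auto
  define r where "r = (c+m)*(d+m)/((c+d+m)*(m+1))"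
  have pos: "(c+d+m)*(m+1) > 0" using assms by simp
  have "(m+1)^2*(c+d+m) - (m+2)*((c+m)*(d+m)) = (1-c*d)*m + (c+d-2*c*d)"
    by (simp add: algebra_simps power2_eq_square)
  moreover have "(1-c*d)*m \<ge> 0" using assms by simp
  moreover have "c+d-2*c*d \<ge> 0" using two_cd[OF assms(1-3)] by simp
  ultimately have A: "(m+2)*((c+m)*(d+m)) \<le> (m+1)^2*(c+d+m)" by linarith
  have "(m+2)*r \<le> m+1"
  proof -
    have "(m+2)*r = (m+2)*((c+m)*(d+m)) / ((c+d+m)*(m+1))" by (simp add: r_def)
    also have "\<dots> \<le> (m+1)^2*(c+d+m) / ((c+d+m)*(m+1))"
      using A pos by (intro divide_right_mono) auto
    also have "\<dots> = m+1" using pos by (simp add: power2_eq_square field_simps)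
    finally show ?thesis .
  qed
  hence "(m+2) * (hc c d m * r) \<le> (m+1) * hc c d m"
    using hc_pos[OF assms(1,2), of m]
    by (metis mult.left_commute mult.commute mult_le_cancel_left_pos)
  then show ?thesis
    unfolding n wc_def diffs_ec hc_Suc[OF assms(1,2)] r_def
    by (simp add: algebra_simps)
qed

lemma psi_sums:
  fixes c d x :: real
  assumes "c > 0" "d > 0" "c*d \<le> 1" "norm x < 1"
  shows "(\<lambda>n. wc c d n * x^n) sums psi c d x"
proof -
  let ?D = "\<lambda>n. diffs (ec c d) n * x^n"
  have S: "?D sums gd c d x" unfolding gd_def
    using gd_summable[OF assms] by (simp add: summable_sums)
  have "(\<lambda>n. x * ?D n) sums (x * gd c d x)" by (rule sums_mult[OF S])
  hence "(\<lambda>n. (if Suc n = 0 then 0 else diffs (ec c d) (Suc n - 1)) * x^(Suc n)) sums (x * gd c d x)"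
    by (simp add: algebra_simps)
  hence T: "(\<lambda>n. (if n = 0 then 0 else diffs (ec c d) (n - 1)) * x^n) sums (x * gd c d x)"
    by (subst (asm) sums_Suc_iff) simp
  have "(\<lambda>n. ?D n - (if n = 0 then 0 else diffs (ec c d) (n - 1)) * x^n) sums (gd c d x - x * gd c d x)"
    by (rule sums_diff[OF S T])
  then show ?thesis unfolding psi_def wc_def by (simp add: algebra_simps)
qed

lemma psi_antimono:
  fixes c d x y :: real
  assumes "c > 0" "d > 0" "c*d \<le> 1" "0 \<le> x" "x \<le> y" "y < 1"
  shows "psi c d y \<le> psi c d x"
proof -
  have sx: "(\<lambda>n. wc c d n * x^n) sums psi c d x" using assms by (intro psi_sums) auto
  have sy: "(\<lambda>n. wc c d n * y^n) sums psi c d y" using assms by (intro psi_sums) auto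
  have "\<And>n. wc c d n * y^n \<le> wc c d n * x^n"
  proof -
    fix n :: nat
    show "wc c d n * y^n \<le> wc c d n * x^n"
    proof (cases "n = 0")
      case False
      then have "wc c d n \<le> 0" using wc_nonpos[OF assms(1-3)] by simp
      moreover have "x^n \<le> y^n" using assms by (intro power_mono) auto
      ultimately show ?thesis by (simp add: mult_left_mono_neg)
    qed simp
  qed
  then show ?thesis using sums_le[OF _ sy sx] by blast
qed

lemma gd_ge1:
  fixes c d x :: real
  assumes "c > 0" "d > 0" "c*d \<le> 1" "0 \<le> x" "x < 1"
  shows "gd c d x \<ge> 1"
proof -
  have sm: "summable (\<lambda>n. diffs (ec c d) n * x^n)" using assms by (intro gd_summable) auto
  have "sum (\<lambda>n. diffs (ec c d) n * x^n) {0} \<le> gd c d x" unfolding gd_def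
    by (rule sum_le_suminf[OF sm]) (use hc_pos[OF assms(1,2)] assms in \<open>auto simp: diffs_ec less_imp_le\<close>)
  then show ?thesis by (simp add: diffs_ec hc_def)
qed

lemma gg_pos:
  fixes c d x :: real
  assumes "c > 0" "d > 0" "c*d \<le> 1" "0 < x" "x < 1"
  shows "gg c d x > 0"
proof -
  have sm: "summable (\<lambda>n. ec c d n * x^n)" using assms by (intro ec_summable) auto
  have "sum (\<lambda>n. ec c d n * x^n) {1} \<le> gg c d x" unfolding gg_def
    by (rule sum_le_suminf[OF sm]) (use ec_bounds[OF assms(1-3)] assms in \<open>auto\<close>)
  then show ?thesis using assms by (simp add: ec_def hc_def)
qed

lemma g_eq_gg:
  fixes c d x :: real
  assumes "c > 0" "d > 0" "c*d \<le> 1" "norm x < 1"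
  shows "x * hyp2F1 c d (c + d) x = gg c d x"
proof -
  have h: "hyp2F1 c d (c + d) x = (\<Sum>n. hc c d n * x^n)"
    unfolding hyp2F1_def hc_def by simp
  have sm: "summable (\<lambda>n. hc c d n * x^n)"
  proof -
    have "summable (\<lambda>n. ec c d (Suc n) * x^(Suc n))"
      using ec_summable[OF assms] by (subst summable_Suc_iff)
    hence "summable (\<lambda>n. x * (hc c d n * x^n))" by (simp add: ec_def algebra_simps)
    show ?thesis
    proof (cases "x = 0")
      case True then show ?thesis by simp
    next
      case False
      with \<open>summable (\<lambda>n. x * (hc c d n * x^n))\<close> show ?thesis
        using summable_mult[of _ "1/x"] by (metis (no_types) summable_mult_D)
    qed
  qed
  have "(\<lambda>n. x * (hc c d n * x^n)) sums (x * (\<Sum>n. hc c d n * x^n))"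
    by (rule sums_mult[OF summable_sums[OF sm]])
  hence "(\<lambda>n. ec c d (Suc n) * x^(Suc n)) sums (x * (\<Sum>n. hc c d n * x^n))"
    by (simp add: ec_def algebra_simps)
  hence "(\<lambda>n. ec c d n * x^n) sums (x * (\<Sum>n. hc c d n * x^n))"
    by (subst (asm) sums_Suc_iff) (simp add: ec_def)
  then show ?thesis unfolding h gg_def by (simp add: sums_iff)
qed

lemma sig_bounds: "0 < sig t" "sig t < 1"
  unfolding sig_def by (auto simp: add_pos_pos)

lemma sig_neg: "sig (-t) = 1 - sig t"
proof -
  have e: "exp (-t) = 1 / exp t" by (simp add: exp_minus field_simps)
  have p: "exp t > 0" "1 + exp t > 0" using exp_gt_zero[of t] by linarith+
  have "exp (-t) / (1 + exp (-t)) = 1 / (1 + exp t)" unfolding e using p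
    by (simp add: field_simps)
  also have "\<dots> = 1 - exp t / (1 + exp t)" using p by (simp add: field_simps)
  finally show ?thesis unfolding sig_def .
qed

lemma sig_mono: "s \<le> t \<Longrightarrow> sig s \<le> sig t"
  unfolding sig_def by (simp add: divide_simps add_pos_pos) (simp add: algebra_simps)

lemma sig_zero: "sig 0 = 1/2" unfolding sig_def by simp

lemma sig_deriv: "(sig has_field_derivative sig t * (1 - sig t)) (at t)"
proof -
  have nz: "1 + exp t \<noteq> 0" using exp_gt_zero[of t] by linarith
  have "((\<lambda>t. exp t / (1 + exp t)) has_field_derivative
      (exp t * (1 + exp t) - exp t * exp t) / (1 + exp t)^2) (at t)"
    using nz by (auto intro!: derivative_eq_intros simp: power2_eq_square)
  moreover have "(exp t * (1 + exp t) - exp t * exp t) / (1 + exp t)^2 = sig t * (1 - sig t)"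
    unfolding sig_def using nz
    by (simp add: divide_simps power2_eq_square) (simp add: algebra_simps)
  ultimately show ?thesis unfolding sig_def[abs_def] by simp
qed

definition phi :: "real \<Rightarrow> real \<Rightarrow> real \<Rightarrow> real" where
  "phi c d x = x * psi c d x"

lemma G_deriv:
  fixes c d :: real
  assumes "c > 0" "d > 0" "c*d \<le> 1"
  shows "((\<lambda>t. gg c d (sig t)) has_field_derivative phi c d (sig t)) (at t)"
proof -
  have n: "norm (sig t) < 1" using sig_bounds[of t] by simp
  have "((\<lambda>t. gg c d (sig t)) has_field_derivative gd c d (sig t) * (sig t * (1 - sig t))) (at t)"
    by (rule DERIV_chain2[OF gg_deriv[OF assms n] sig_deriv])
  then show ?thesis unfolding phi_def psi_def by (simp add: algebra_simps)
qed

lemma phi_ineq: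
  fixes c d u x :: real
  assumes "c > 0" "d > 0" "c*d \<le> 1" "1/2 \<le> u" "u \<le> x" "x < 1"
  shows "phi c d x \<le> phi c d u + phi c d (1-u)"
proof -
  have a: "psi c d u \<le> psi c d (1-u)" using assms by (intro psi_antimono) auto
  have b: "psi c d x \<le> psi c d u" using assms by (intro psi_antimono) auto
  have p: "psi c d x \<ge> 0" unfolding psi_def using gd_ge1[OF assms(1-3), of x] assms by simp
  have "phi c d u + phi c d (1-u) \<ge> u * psi c d u + (1-u) * psi c d u"
    unfolding phi_def using a assms by (intro add_left_mono mult_left_mono) auto
  also have "u * psi c d u + (1-u) * psi c d u = psi c d u" by (simp add: algebra_simps)
  finally have "phi c d u + phi c d (1-u) \<ge> psi c d x" using b by simp
  moreover have "phi c d x \<le> psi c d x" unfolding phi_def using p assms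
    by (intro mult_left_le_one_le) auto
  ultimately show ?thesis by simp
qed

lemma key:
  fixes c d t :: real
  assumes "c > 0" "d > 0" "c*d \<le> 1"
  shows "t * phi c d (sig t) \<le> gg c d (sig t)"
proof (cases "t > 0")
  case False
  have "phi c d (sig t) \<ge> 0" unfolding phi_def psi_def
    using gd_ge1[OF assms, of "sig t"] sig_bounds[of t] by simp
  hence "t * phi c d (sig t) \<le> 0" using False by (simp add: mult_nonpos_nonneg)
  moreover have "gg c d (sig t) > 0" using gg_pos[OF assms] sig_bounds by auto
  ultimately show ?thesis by simp
next
  case True
  define M where "M = (\<lambda>\<tau>. gg c d (sig \<tau>) - gg c d (sig (-\<tau>)) - \<tau> * phi c d (sig t))"
  have "M 0 \<le> M t"
  proof (rule DERIV_nonneg_imp_nondecreasing[of 0 t M])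
    show "0 \<le> t" using True by simp
    fix \<tau> assume h: "0 \<le> \<tau>" "\<tau> \<le> t"
    have D1: "((\<lambda>\<tau>. gg c d (sig (-\<tau>))) has_field_derivative phi c d (sig (-\<tau>)) * (-1)) (at \<tau>)"
      by (rule DERIV_chain2[OF G_deriv[OF assms]]) (auto intro!: derivative_eq_intros)
    have D2: "((\<lambda>\<tau>. \<tau> * phi c d (sig t)) has_field_derivative 1 * phi c d (sig t)) (at \<tau>)"
      by (auto intro!: derivative_eq_intros)
    have D: "(M has_field_derivative phi c d (sig \<tau>) - phi c d (sig (-\<tau>)) * (-1) - 1 * phi c d (sig t)) (at \<tau>)"
      unfolding M_def by (intro DERIV_diff G_deriv[OF assms] D1 D2)
    have "1/2 \<le> sig \<tau>" using sig_mono[OF h(1)] sig_zero by simp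
    moreover have "sig \<tau> \<le> sig t" using sig_mono[OF h(2)] .
    ultimately have "phi c d (sig t) \<le> phi c d (sig \<tau>) + phi c d (1 - sig \<tau>)"
      using sig_bounds[of t] by (intro phi_ineq[OF assms]) auto
    then show "\<exists>y. (M has_field_derivative y) (at \<tau>) \<and> 0 \<le> y"
      using D by (intro exI[of _ "phi c d (sig \<tau>) - phi c d (sig (-\<tau>)) * (-1) - 1 * phi c d (sig t)"])
        (simp add: sig_neg)
  qed
  hence "t * phi c d (sig t) \<le> gg c d (sig t) - gg c d (sig (-t))" by (simp add: M_def)
  moreover have "gg c d (sig (-t)) > 0" using gg_pos[OF assms] sig_bounds by auto
  ultimately show ?thesis by simp
qed

theorem mainTheorem8:
  fixes c d s :: real and g :: "real \<Rightarrow> real"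
  assumes "c > 0" and "d > 0" and "c * d \<le> 1"
    and "\<And>x. x \<in> {0<..<1} \<Longrightarrow> g x = x * hyp2F1 c d (c + d) x"
    and "s > 0"
  shows "antimono_on {0<..} (\<lambda>p::real. (1 / p) * g (s powr p / (1 + s powr p)))"
proof -
  note cd = assms(1-3)
  define F where "F = (\<lambda>p::real. (1 / p) * gg c d (sig (p * ln s)))"
  have eq: "(1 / p) * g (s powr p / (1 + s powr p)) = F p" for p
  proof -
    have "s powr p / (1 + s powr p) = sig (p * ln s)"
      using assms(5) by (simp add: powr_def sig_def mult.commute)
    moreover have "g (sig (p * ln s)) = gg c d (sig (p * ln s))"
      using assms(4)[of "sig (p * ln s)"] g_eq_gg[OF cd, of "sig (p * ln s)"] sig_bounds[of "p * ln s"]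
      by simp
    ultimately show ?thesis unfolding F_def by simp
  qed
  show ?thesis
  proof (rule monotone_onI)
    fix p q :: real assume pq: "p \<in> {0<..}" "q \<in> {0<..}" "p \<le> q"
    have "F q \<le> F p"
    proof (rule DERIV_nonpos_imp_nonincreasing[of p q F])
      show "p \<le> q" by fact
      fix x assume x: "p \<le> x" "x \<le> q"
      hence xpos: "x > 0" using pq by simp
      let ?t = "x * ln s"
      have D1: "((\<lambda>x. gg c d (sig (x * ln s))) has_field_derivative phi c d (sig ?t) * ln s) (at x)"
        by (rule DERIV_chain2[OF G_deriv[OF cd]]) (auto intro!: derivative_eq_intros)
      have D2: "((\<lambda>x. 1 / x) has_field_derivative - (1 / x^2)) (at x)"
        using xpos by (auto intro!: derivative_eq_intros simp: power2_eq_square)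
      have D: "(F has_field_derivative (- (1 / x^2)) * gg c d (sig ?t) + (1/x) * (phi c d (sig ?t) * ln s)) (at x)"
        unfolding F_def using DERIV_mult[OF D2 D1] by (simp add: algebra_simps)
      have "(- (1 / x^2)) * gg c d (sig ?t) + (1/x) * (phi c d (sig ?t) * ln s)
          = (?t * phi c d (sig ?t) - gg c d (sig ?t)) / x^2"
        using xpos by (simp add: field_simps power2_eq_square)
      also have "\<dots> \<le> 0" using key[OF cd, of ?t] by (intro divide_nonpos_nonneg) auto
      finally show "\<exists>y. (F has_field_derivative y) (at x) \<and> y \<le> 0" using D by blast
    qed
    then show "(1 / q) * g (s powr q / (1 + s powr q)) \<le> (1 / p) * g (s powr p / (1 + s powr p))"
      unfolding eq .
  qed
qed

end
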